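(* Under the standing assumptions below, $c_*(0)>2\sqrt{p-1}$, $c_*(1)>\sqrt{\ln p}$, and $$c_*(h)>2\sqrt{\frac{p-1}{p(2h+h^2)+1}}\qquad\text{for all } h\ge0 .$$
   Context: Let $K:\mathbb R\to[0,\infty)$ be measurable with $K(s)=K(-s)$ for all $s\in\mathbb R$, $\int_{\mathbb R}K(s)\,ds=1$, and $\int_{\mathbb R}K(s)e^{\lambda s}ds<\infty$ for every $\lambda\in\mathbb R$. Fix $p>1$. For $h\ge0$, $z\in\mathbb R$, $\varepsilon>0$ set $$\psi_h(z,\varepsilon)=\varepsilon z^2-z-1+p\,e^{-zh}\int_{\mathbb R}K(s)e^{-\sqrt{\varepsilon}\,zs}\,ds .$$ Standing fact (known, assumed): for every $h\ge0$ there is exactly one pair $(z_0(h),\varepsilon_0(h))$ with $z_0(h)>0$, $\varepsilon_0(h)>0$ satisfying $\psi_h(z_0,\varepsilon_0)=0$ and $\partial_z\psi_h(z_0,\varepsilon_0)=0$; moreover $\varepsilon_0(h)$ is the largest $\varepsilon>0$ for which $\psi_h(\cdot,\varepsilon)$ has a positive zero, and $\psi_h(z,\varepsilon)>0$ for all $z>0$ whenever $\varepsilon>\varepsilon_0(h)$. Define $c_*(h)=1/\sqrt{\varepsilon_0(h)}$. *)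

theory Defs
  imports "HOL-Analysis.Analysis"
begin

definition psi :: "(real \<Rightarrow> real) \<Rightarrow> real \<Rightarrow> real \<Rightarrow> real \<Rightarrow> real \<Rightarrow> real" where
  "psi K p h z \<epsilon> = \<epsilon> * z\<^sup>2 - z - 1 + p * exp (- z * h) *
      (\<integral>s. K s * exp (- sqrt \<epsilon> * z * s) \<partial>lborel)"

definition c_star :: "(real \<Rightarrow> real) \<Rightarrow> real \<Rightarrow> real" where
  "c_star \<epsilon>0 h = 1 / sqrt (\<epsilon>0 h)"

end

theory Submission
  imports Defs
begin

lemma I_gt_one:
  fixes K :: "real \<Rightarrow> real"
  assumes K_meas: "K \<in> borel_measurable borel"
    and K_nonneg: "\<And>s. K s \<ge> 0"
    and K_sym: "\<And>s. K s = K (- s)"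
    and K_int: "integrable lborel K"
    and K_mass: "(\<integral>s. K s \<partial>lborel) = 1"
    and K_exp: "\<And>l::real. integrable lborel (\<lambda>s. K s * exp (l * s))"
    and lam: "lam \<noteq> 0"
  shows "(\<integral>s. K s * exp (- lam * s) \<partial>lborel) > 1"
proof -
  have m[measurable]: "K \<in> borel_measurable lborel" using K_meas by simp
  have ie: "integrable lborel (\<lambda>s. K s * exp (- lam * s))" using K_exp[of "- lam"] by simp
  have ig: "integrable lborel (\<lambda>s. K s * s)"
  proof (rule Bochner_Integration.integrable_bound)
    show "integrable lborel (\<lambda>s. K s * exp (1 * s) + K s * exp (-1 * s))"
      using K_exp[of 1] K_exp[of "-1"] by (intro Bochner_Integration.integrable_add) auto
    show "(\<lambda>s. K s * s) \<in> borel_measurable lborel" by measurable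
    show "AE s in lborel. norm (K s * s) \<le> norm (K s * exp (1 * s) + K s * exp (-1 * s))"
    proof (intro AE_I2)
      fix s :: real
      have a: "\<bar>s\<bar> \<le> exp s + exp (-s)"
      proof -
        have "s < exp s" "- s < exp (- s)" "0 < exp s" "0 < exp (-s)"
          using exp_gt_self[of s] exp_gt_self[of "-s"] by auto
        then show ?thesis by linarith
      qed
      have "norm (K s * s) = K s * \<bar>s\<bar>" using K_nonneg[of s] by (simp add: abs_mult)
      also have "\<dots> \<le> K s * (exp s + exp (-s))" using a K_nonneg[of s] by (simp add: mult_left_mono)
      also have "\<dots> = norm (K s * exp (1 * s) + K s * exp (-1 * s))"
        using K_nonneg[of s] by (simp add: algebra_simps)
      finally show "norm (K s * s) \<le> norm (K s * exp (1 * s) + K s * exp (-1 * s))" .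
    qed
  qed
  have g0: "(\<integral>s. K s * s \<partial>lborel) = 0"
  proof -
    have "(\<integral>s. K s * s \<partial>lborel) = \<bar>-1::real\<bar> *\<^sub>R (\<integral>x. K (0 + -1 * x) * (0 + -1 * x) \<partial>lborel)"
      by (rule lborel_integral_real_affine) simp
    also have "\<dots> = - (\<integral>x. K x * x \<partial>lborel)"
    proof -
      have "(\<lambda>x. K (0 + -1 * x) * (0 + -1 * x)) = (\<lambda>x. - (K x * x))"
        using K_sym by (auto intro!: ext)
      then show ?thesis by simp
    qed
    finally show ?thesis by simp
  qed
  define f where "f s = K s * exp (- lam * s) - K s + lam * (K s * s)" for s
  have ig2: "integrable lborel (\<lambda>s. lam * (K s * s))" using ig by (rule integrable_mult_right)
  have i1: "integrable lborel (\<lambda>s. K s * exp (- lam * s) - K s)"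
    using ie K_int by (rule Bochner_Integration.integrable_diff)
  have fi: "integrable lborel f" unfolding f_def
    using i1 ig2 by (rule Bochner_Integration.integrable_add)
  have fint: "(\<integral>s. f s \<partial>lborel) = (\<integral>s. K s * exp (- lam * s) \<partial>lborel) - 1"
  proof -
    have "(\<integral>s. f s \<partial>lborel) = (\<integral>s. K s * exp (- lam * s) - K s \<partial>lborel) + (\<integral>s. lam * (K s * s) \<partial>lborel)"
      unfolding f_def by (rule Bochner_Integration.integral_add[OF i1 ig2])
    also have "(\<integral>s. K s * exp (- lam * s) - K s \<partial>lborel) = (\<integral>s. K s * exp (- lam * s) \<partial>lborel) - (\<integral>s. K s \<partial>lborel)"
      by (rule Bochner_Integration.integral_diff[OF ie K_int])
    also have "(\<integral>s. lam * (K s * s) \<partial>lborel) = lam * (\<integral>s. K s * s \<partial>lborel)"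
      using ig by (rule Bochner_Integration.integral_mult_right)
    finally show ?thesis using g0 K_mass by simp
  qed
  have fnn: "f s \<ge> 0" for s
  proof -
    have "1 - lam * s \<le> exp (- (lam * s))" by (rule exp_minus_ge)
    then have "0 \<le> K s * (exp (- lam * s) - 1 + lam * s)" using K_nonneg[of s] by simp
    then show ?thesis unfolding f_def by (simp add: algebra_simps)
  qed
  have "(\<integral>s. f s \<partial>lborel) \<noteq> 0"
  proof
    assume "(\<integral>s. f s \<partial>lborel) = 0"
    then have ae: "AE s in lborel. f s = 0"
      using integral_nonneg_eq_0_iff_AE[OF fi] fnn by auto
    have "AE s in lborel. K s = 0"
      using ae AE_lborel_singleton[of "0::real"]
    proof eventually_elim
      case (elim s)
      have "1 - lam * s < exp (- (lam * s))" using exp_minus_greater[of "lam * s"] elim lam by simp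
      then have "exp (- lam * s) - 1 + lam * s > 0" by simp
      moreover have "K s * (exp (- lam * s) - 1 + lam * s) = 0"
        using elim(1) unfolding f_def by (simp add: algebra_simps)
      ultimately show ?case by simp
    qed
    then have "(\<integral>s. K s \<partial>lborel) = 0" by (rule integral_eq_zero_AE)
    then show False using K_mass by simp
  qed
  moreover have "(\<integral>s. f s \<partial>lborel) \<ge> 0" using fnn by (simp add: Bochner_Integration.integral_nonneg)
  ultimately show ?thesis using fint by linarith
qed


lemma g_nonneg:
  fixes p h z :: real
  assumes p: "p > 1" and h: "h \<ge> 0" and z: "z \<ge> 0"
  shows "(p * (2 * h + h\<^sup>2) + 1) / (4 * (p - 1)) * z\<^sup>2 - z - 1 + p * exp (- z * h) \<ge> 0"
proof -
  define a where "a = exp (- (z * h / 2))"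
  define w where "w = z / 2"
  define b where "b = (1 + h) * w"
  have a2: "a\<^sup>2 = exp (- z * h)" unfolding a_def
    by (simp add: power2_eq_square exp_add[symmetric])
  have "a \<ge> 1 - z * h / 2" unfolding a_def by (rule exp_minus_ge)
  moreover have "(1 + h) * (z / 2) = z / 2 + z * h / 2" by (simp add: algebra_simps)
  ultimately have ab: "a + b \<ge> 1 + w" unfolding b_def w_def by linarith
  have w0: "1 + w \<ge> 0" unfolding w_def using z by simp
  have sq: "(a + b)\<^sup>2 \<ge> (1 + w)\<^sup>2" using ab w0 by (simp add: power_mono)
  have cs: "p * a\<^sup>2 + p * b\<^sup>2 / (p - 1) - (a + b)\<^sup>2 = ((p - 1) * a - b)\<^sup>2 / (p - 1)"
    using p by (simp add: field_simps power2_eq_square)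
  have "((p - 1) * a - b)\<^sup>2 / (p - 1) \<ge> 0" using p by simp
  have eq: "(p * (2 * h + h\<^sup>2) + 1) / (4 * (p - 1)) * z\<^sup>2 - z - 1 + p * exp (- z * h)
      = p * a\<^sup>2 + p * b\<^sup>2 / (p - 1) - (1 + w)\<^sup>2"
    unfolding a2[symmetric] b_def w_def using p by (simp add: field_simps power2_eq_square)
  show ?thesis unfolding eq using cs sq \<open>((p - 1) * a - b)\<^sup>2 / (p - 1) \<ge> 0\<close> by linarith
qed

lemma g1_nonneg:
  fixes p z :: real
  assumes p: "p > 1"
  shows "z\<^sup>2 / ln p - z - 1 + p * exp (- z * 1) \<ge> 0"
proof -
  define L where "L = ln p"
  have L: "L > 0" unfolding L_def using p by simp
  have "p * exp (- z * 1) = exp (L - z)" unfolding L_def using p by (simp add: exp_diff exp_minus field_simps)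
  also have "\<dots> \<ge> 1 + (L - z)" by (rule exp_ge_add_one_self)
  finally have e: "p * exp (- z * 1) \<ge> 1 + L - z" by simp
  have "z\<^sup>2 / L - 2 * z + L = (z - L)\<^sup>2 / L" using L by (simp add: field_simps power2_eq_square)
  moreover have "(z - L)\<^sup>2 / L \<ge> 0" using L by simp
  ultimately show ?thesis using e unfolding L_def[symmetric] by linarith
qed

lemma sqrt_bound:
  fixes e x :: real
  assumes "e > 0" "x \<ge> 0" "e * x < 1"
  shows "sqrt x < 1 / sqrt e"
proof -
  have "x < 1 / e" using assms by (simp add: field_simps)
  then have "sqrt x < sqrt (1 / e)" by simp
  then show ?thesis by (simp add: real_sqrt_divide)
qed

theorem mainTheorem4:
  fixes K :: "real \<Rightarrow> real" and p :: real
    and z0 \<epsilon>0 :: "real \<Rightarrow> real"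
  assumes K_meas: "K \<in> borel_measurable borel"
    and K_nonneg: "\<And>s. K s \<ge> 0"
    and K_sym: "\<And>s. K s = K (- s)"
    and K_int: "integrable lborel K"
    and K_mass: "(\<integral>s. K s \<partial>lborel) = 1"
    and K_exp: "\<And>l::real. integrable lborel (\<lambda>s. K s * exp (l * s))"
    and p_gt: "p > 1"
    and z0_pos: "\<And>h. h \<ge> 0 \<Longrightarrow> z0 h > 0"
    and eps0_pos: "\<And>h. h \<ge> 0 \<Longrightarrow> \<epsilon>0 h > 0"
    and touch: "\<And>h. h \<ge> 0 \<Longrightarrow> psi K p h (z0 h) (\<epsilon>0 h) = 0"
    and touch_deriv: "\<And>h. h \<ge> 0 \<Longrightarrow>
        ((\<lambda>z. psi K p h z (\<epsilon>0 h)) has_real_derivative 0) (at (z0 h))"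
    and touch_unique: "\<And>h z \<epsilon>. h \<ge> 0 \<Longrightarrow> z > 0 \<Longrightarrow> \<epsilon> > 0 \<Longrightarrow>
        psi K p h z \<epsilon> = 0 \<Longrightarrow>
        ((\<lambda>w. psi K p h w \<epsilon>) has_real_derivative 0) (at z) \<Longrightarrow>
        z = z0 h \<and> \<epsilon> = \<epsilon>0 h"
    and eps0_max: "\<And>h z \<epsilon>. h \<ge> 0 \<Longrightarrow> z > 0 \<Longrightarrow> \<epsilon> > 0 \<Longrightarrow>
        psi K p h z \<epsilon> = 0 \<Longrightarrow> \<epsilon> \<le> \<epsilon>0 h"
    and above_pos: "\<And>h z \<epsilon>. h \<ge> 0 \<Longrightarrow> \<epsilon> > \<epsilon>0 h \<Longrightarrow> z > 0 \<Longrightarrow>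
        psi K p h z \<epsilon> > 0"
  shows "c_star \<epsilon>0 0 > 2 * sqrt (p - 1)
    \<and> c_star \<epsilon>0 1 > sqrt (ln p)
    \<and> (\<forall>h\<ge>0. c_star \<epsilon>0 h > 2 * sqrt ((p - 1) / (p * (2 * h + h\<^sup>2) + 1)))"
proof -
  have key: "\<epsilon>0 h * (z0 h)\<^sup>2 - z0 h - 1 + p * exp (- z0 h * h) < 0" if h: "h \<ge> 0" for h
  proof -
    define z e where "z = z0 h" and "e = \<epsilon>0 h"
    have z: "z > 0" and e: "e > 0" using z0_pos[OF h] eps0_pos[OF h] unfolding z_def e_def by auto
    have lam: "sqrt e * z \<noteq> 0" using z e by simp
    have I: "(\<integral>s. K s * exp (- (sqrt e * z) * s) \<partial>lborel) > 1"
      by (rule I_gt_one[OF K_meas K_nonneg K_sym K_int K_mass K_exp lam])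
    have I': "(\<integral>s. K s * exp (- sqrt e * z * s) \<partial>lborel) > 1" using I by simp
    have t: "e * z\<^sup>2 - z - 1 + p * exp (- z * h) * (\<integral>s. K s * exp (- sqrt e * z * s) \<partial>lborel) = 0"
      using touch[OF h] unfolding psi_def z_def e_def .
    have pe: "p * exp (- z * h) > 0" using p_gt by simp
    have "p * exp (- z * h) < p * exp (- z * h) * (\<integral>s. K s * exp (- sqrt e * z * s) \<partial>lborel)"
      using mult_strict_left_mono[OF I' pe] by simp
    then show ?thesis using t unfolding z_def e_def by linarith
  qed
  have gen: "c_star \<epsilon>0 h > 2 * sqrt ((p - 1) / (p * (2 * h + h\<^sup>2) + 1))" if h: "h \<ge> 0" for h
  proof -
    define z e A where "z = z0 h" and "e = \<epsilon>0 h" and "A = (p * (2 * h + h\<^sup>2) + 1) / (4 * (p - 1))"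
    have z: "z > 0" and e: "e > 0" using z0_pos[OF h] eps0_pos[OF h] unfolding z_def e_def by auto
    have g: "A * z\<^sup>2 - z - 1 + p * exp (- z * h) \<ge> 0"
      unfolding A_def using g_nonneg[OF p_gt h, of z] z by simp
    have k: "e * z\<^sup>2 - z - 1 + p * exp (- z * h) < 0" using key[OF h] unfolding z_def e_def .
    have "e * z\<^sup>2 < A * z\<^sup>2" using g k by linarith
    then have eA: "e < A" using z by simp
    have D: "p * (2 * h + h\<^sup>2) + 1 > 0" proof -
      have "p * (2 * h + h\<^sup>2) \<ge> 0" using p_gt h by simp
      then show ?thesis by linarith
    qed
    have "2 * sqrt ((p - 1) / (p * (2 * h + h\<^sup>2) + 1)) = sqrt (4 * ((p - 1) / (p * (2 * h + h\<^sup>2) + 1)))"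
      by (simp only: real_sqrt_mult) simp
    also have "\<dots> < 1 / sqrt e"
    proof (rule sqrt_bound[OF e])
      show "0 \<le> 4 * ((p - 1) / (p * (2 * h + h\<^sup>2) + 1))" using p_gt D by simp
      have "e * (4 * ((p - 1) / (p * (2 * h + h\<^sup>2) + 1))) < A * (4 * ((p - 1) / (p * (2 * h + h\<^sup>2) + 1)))"
      proof (rule mult_strict_right_mono[OF eA])
        show "0 < 4 * ((p - 1) / (p * (2 * h + h\<^sup>2) + 1))" using p_gt D by simp
      qed
      also have "\<dots> = 1"
      proof -
        have n1: "p - 1 \<noteq> 0" using p_gt by simp
        have n2: "p * (2 * h + h\<^sup>2) + 1 \<noteq> 0" using D by simp
        show ?thesis unfolding A_def using n1 n2 by (simp add: divide_simps)
      qed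
      finally show "e * (4 * ((p - 1) / (p * (2 * h + h\<^sup>2) + 1))) < 1" .
    qed
    finally show ?thesis unfolding c_star_def e_def .
  qed
  have one: "c_star \<epsilon>0 1 > sqrt (ln p)"
  proof -
    define z e where "z = z0 1" and "e = \<epsilon>0 1"
    have z: "z > 0" and e: "e > 0" using z0_pos eps0_pos unfolding z_def e_def by auto
    have L: "ln p > 0" using p_gt by simp
    have g: "z\<^sup>2 / ln p - z - 1 + p * exp (- z * 1) \<ge> 0" by (rule g1_nonneg[OF p_gt])
    have k: "e * z\<^sup>2 - z - 1 + p * exp (- z * 1) < 0" using key[of 1] unfolding z_def e_def by simp
    have "e * z\<^sup>2 < z\<^sup>2 / ln p" using g k by linarith
    then have "e * z\<^sup>2 < (1 / ln p) * z\<^sup>2" by simp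
    moreover have "z\<^sup>2 > 0" using z by simp
    ultimately have "e < 1 / ln p" using mult_less_cancel_right_pos by blast
    then have "e * ln p < 1" using L by (simp add: field_simps)
    then have "sqrt (ln p) < 1 / sqrt e" using sqrt_bound[OF e] L by simp
    then show ?thesis unfolding c_star_def e_def .
  qed
  have zero: "c_star \<epsilon>0 0 > 2 * sqrt (p - 1)" using gen[of 0] by simp
  show ?thesis using zero one gen by auto
qed

end
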